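(* Let $n\in\mathbb N$, $\overrightarrow{\Phi}=(\phi_1,\dots,\phi_n)$ a tuple of Orlicz functions, $\chi$ a kernel, and $w>0$. Let $K_w(f)(\mathbf x)=\sum_{\mathbf k\in\mathbb Z^n}\chi(w\mathbf x-\mathbf k)\,w^n\int_{I_{\mathbf k,w}}f(\mathbf t)\,d\mathbf t$ with $I_{\mathbf k,w}=\prod_{j=1}^n[\frac{k_j}{w},\frac{k_j+1}{w}]$. Then for every $f\in L^{\overrightarrow\Phi}(\mathbb R^n)$ and every $\lambda>0$, $$I^{\overrightarrow\Phi}(\lambda K_wf)\le\frac{\|\chi\|_1}{(m_0(\chi))^n}\,I^{\overrightarrow\Phi}\big(\lambda (m_0(\chi))^nf\big).$$
   Context: An Orlicz function is a convex, lower semicontinuous, non-decreasing $\phi:[0,\infty)\to[0,\infty]$ with $\phi(0)=0$, $\phi(u)>0$ for $u>0$, and $\lim_{u\to\infty}\phi(u)=\infty$. For measurable $f$ on $\mathbb R^n$, the modular is $I^{\overrightarrow\Phi}(f)=\int_{\mathbb R}\phi_n\Big(\cdots\int_{\mathbb R}\phi_2\Big(\int_{\mathbb R}\phi_1(|f(x_1,\dots,x_n)|)\,dx_1\Big)dx_2\cdots\Big)dx_n$. The mixed norm Orlicz space $L^{\overrightarrow\Phi}(\mathbb R^n)$ is the set of bounded measurable $f:\mathbb R^n\to\mathbb R$ with $I^{\overrightarrow\Phi}(\lambda f)<\infty$ for some $\lambda>0$. A kernel is a function $\chi:\mathbb R^n\to\mathbb R$ with $\chi\in L^1(\mathbb R^n)$,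 bounded in a neighborhood of the origin, such that $\sum_{\mathbf k\in\mathbb Z^n}\chi(\mathbf u-\mathbf k)=1$ for every $\mathbf u\in\mathbb R^n$, and for a fixed $\alpha\ge0$ the absolute moment $m_\alpha(\chi):=\sup_{\mathbf u}\sum_{\mathbf k\in\mathbb Z^n}|\chi(\mathbf u-\mathbf k)|\,\|\mathbf u-\mathbf k\|_2^\alpha$ is finite; $m_0(\chi)=\sup_{\mathbf u}\sum_{\mathbf k}|\chi(\mathbf u-\mathbf k)|$. *)

theory Defs
  imports "HOL-Analysis.Analysis"
begin

text \<open>Points of R^n are represented as extensional functions nat => real
  on the index set {..<n} (coordinate x_(j+1) is x j).  R^n carries the
  product Lebesgue (Borel) measure.\<close>

definition Rn :: "nat \<Rightarrow> (nat \<Rightarrow> real) set" where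
  "Rn n = PiE {..<n} (\<lambda>_. UNIV)"

definition Zn :: "nat \<Rightarrow> (nat \<Rightarrow> int) set" where
  "Zn n = PiE {..<n} (\<lambda>_. UNIV)"

definition lebn :: "nat \<Rightarrow> (nat \<Rightarrow> real) measure" where
  "lebn n = PiM {..<n} (\<lambda>_. lborel)"

definition vnorm :: "nat \<Rightarrow> (nat \<Rightarrow> real) \<Rightarrow> real" where
  "vnorm n u = sqrt (\<Sum>i<n. (u i)\<^sup>2)"

definition vsub :: "nat \<Rightarrow> (nat \<Rightarrow> real) \<Rightarrow> (nat \<Rightarrow> int) \<Rightarrow> (nat \<Rightarrow> real)" where
  "vsub n u k = restrict (\<lambda>i. u i - real_of_int (k i)) {..<n}"

text \<open>x^a for x >= 0, a >= 0, with the convention 0^0 = 1\<close>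
definition pw :: "real \<Rightarrow> real \<Rightarrow> real" where
  "pw x a = (if x = 0 then (if a = 0 then 1 else 0) else x powr a)"

text \<open>Orlicz function, values in [0,\<infinity>]; only its values on [0,\<infinity>) matter.\<close>
definition orlicz :: "(real \<Rightarrow> ennreal) \<Rightarrow> bool" where
  "orlicz \<phi> \<longleftrightarrow>
     \<phi> 0 = 0 \<and>
     (\<forall>u>0. \<phi> u > 0) \<and>
     mono_on {0..} \<phi> \<and>
     (\<forall>u\<ge>0. \<forall>v\<ge>0. \<forall>t\<in>{0..1}.
        \<phi> (t * u + (1 - t) * v) \<le> ennreal t * \<phi> u + ennreal (1 - t) * \<phi> v) \<and>
     (\<forall>u\<ge>0. \<phi> u \<le> Liminf (at u within {0..}) \<phi>) \<and>
     (\<phi> \<longlongrightarrow> \<infinity>) at_top"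

text \<open>Extension of an Orlicz function to [0,\<infinity>] by phi(\<infinity>) = \<infinity>
  (needed since inner integrals of the modular may be infinite).\<close>
definition phi_ext :: "(real \<Rightarrow> ennreal) \<Rightarrow> ennreal \<Rightarrow> ennreal" where
  "phi_ext \<phi> y = (if y = \<infinity> then \<infinity> else \<phi> (enn2real y))"

text \<open>Iterated modular: level j+1 integrates phi_(j+1)(level j) over coordinate x_(j+1).\<close>
fun modG :: "nat \<Rightarrow> (nat \<Rightarrow> real \<Rightarrow> ennreal) \<Rightarrow> ((nat \<Rightarrow> real) \<Rightarrow> real)
              \<Rightarrow> (nat \<Rightarrow> real) \<Rightarrow> ennreal" where
  "modG 0 \<Phi> f x = ennreal \<bar>f x\<bar>"
| "modG (Suc j) \<Phi> f x = (\<integral>\<^sup>+ t. phi_ext (\<Phi> j) (modG j \<Phi> f (x(j := t))) \<partial>lborel)"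

definition modular :: "nat \<Rightarrow> (nat \<Rightarrow> real \<Rightarrow> ennreal) \<Rightarrow> ((nat \<Rightarrow> real) \<Rightarrow> real) \<Rightarrow> ennreal" where
  "modular n \<Phi> f = modG n \<Phi> f (\<lambda>_. undefined)"

definition orlicz_space :: "nat \<Rightarrow> (nat \<Rightarrow> real \<Rightarrow> ennreal) \<Rightarrow> ((nat \<Rightarrow> real) \<Rightarrow> real) set" where
  "orlicz_space n \<Phi> = {f. f \<in> borel_measurable (lebn n) \<and>
       (\<exists>B. \<forall>x\<in>Rn n. \<bar>f x\<bar> \<le> B) \<and>
       (\<exists>lam>0. modular n \<Phi> (\<lambda>x. lam * f x) < \<infinity>)}"

definition moment :: "nat \<Rightarrow> ((nat \<Rightarrow> real) \<Rightarrow> real) \<Rightarrow> real \<Rightarrow> ennreal" where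
  "moment n chi \<alpha> = (SUP u\<in>Rn n. (\<integral>\<^sup>+ k. ennreal (\<bar>chi (vsub n u k)\<bar> * pw (vnorm n (vsub n u k)) \<alpha>)
                                   \<partial>count_space (Zn n)))"

definition sampling_kernel :: "nat \<Rightarrow> ((nat \<Rightarrow> real) \<Rightarrow> real) \<Rightarrow> real \<Rightarrow> bool" where
  "sampling_kernel n chi \<alpha> \<longleftrightarrow>
     integrable (lebn n) chi \<and>
     (\<exists>\<delta>>0. \<exists>M. \<forall>u\<in>Rn n. vnorm n u < \<delta> \<longrightarrow> \<bar>chi u\<bar> \<le> M) \<and>
     (\<forall>u\<in>Rn n. ((\<lambda>k. chi (vsub n u k)) has_sum 1) (Zn n)) \<and>
     \<alpha> \<ge> 0 \<and> moment n chi \<alpha> < \<infinity>"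

definition box :: "nat \<Rightarrow> real \<Rightarrow> (nat \<Rightarrow> int) \<Rightarrow> (nat \<Rightarrow> real) set" where
  "box n w k = PiE {..<n} (\<lambda>i. {real_of_int (k i) / w .. (real_of_int (k i) + 1) / w})"

definition kant :: "nat \<Rightarrow> ((nat \<Rightarrow> real) \<Rightarrow> real) \<Rightarrow> real \<Rightarrow> ((nat \<Rightarrow> real) \<Rightarrow> real)
                     \<Rightarrow> (nat \<Rightarrow> real) \<Rightarrow> real" where
  "kant n chi w f x = (\<Sum>\<^sub>\<infinity> k\<in>Zn n.
       chi (vsub n (\<lambda>i. w * x i) k) * w ^ n * (LINT t:box n w k|lebn n. f t))"

end

theory Submission
  imports Defs
begin
lemma upset_borel:
  fixes U :: "ennreal set"
  assumes up: "\<And>x y. x \<in> U \<Longrightarrow> x \<le> y \<Longrightarrow> y \<in> U"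
  shows "U \<in> sets borel"
proof -
  define a where "a = Inf U"
  show ?thesis
  proof (cases "a \<in> U")
    case True
    have "U = {a..}"
    proof (intro set_eqI iffI)
      fix x assume "x \<in> U" then show "x \<in> {a..}" by (simp add: a_def Inf_lower)
    next
      fix x assume "x \<in> {a..}" then show "x \<in> U" using up[OF True] by simp
    qed
    then show ?thesis by simp
  next
    case F: False
    have "U = {a<..}"
    proof (intro set_eqI iffI)
      fix x assume "x \<in> U" then have "a \<le> x" by (simp add: a_def Inf_lower)
      moreover have "x \<noteq> a" using F \<open>x \<in> U\<close> by metis
      ultimately show "x \<in> {a<..}" by simp
    next
      fix x assume "x \<in> {a<..}"
      then have "Inf U < x" by (simp add: a_def)
      then obtain y where "y \<in> U" "y < x" by (meson Inf_less_iff)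
      then show "x \<in> U" using up less_imp_le by metis
    qed
    then show ?thesis by simp
  qed
qed

lemma mono_borel_ennreal:
  fixes g :: "ennreal \<Rightarrow> ennreal"
  assumes "mono g"
  shows "g \<in> borel_measurable borel"
proof (rule borel_measurableI_greater)
  fix y
  have "{x. y < g x} \<in> sets borel"
  proof (rule upset_borel)
    fix a b assume "a \<in> {x. y < g x}" "a \<le> b"
    then have "y < g a" "g a \<le> g b" using assms by (auto simp: mono_def)
    then show "b \<in> {x. y < g x}" by simp
  qed
  then show "{x \<in> space borel. y < g x} \<in> sets borel" by simp
qed

lemma orlicz_mono: "orlicz \<phi> \<Longrightarrow> 0 \<le> x \<Longrightarrow> x \<le> y \<Longrightarrow> \<phi> x \<le> \<phi> y"
  unfolding orlicz_def mono_on_def by auto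

lemma orlicz_convex: "orlicz \<phi> \<Longrightarrow> 0 \<le> u \<Longrightarrow> 0 \<le> v \<Longrightarrow> 0 \<le> t \<Longrightarrow> t \<le> 1 \<Longrightarrow>
   \<phi> (t * u + (1 - t) * v) \<le> ennreal t * \<phi> u + ennreal (1 - t) * \<phi> v"
  unfolding orlicz_def by auto

lemma phi_ext_mono: "orlicz \<phi> \<Longrightarrow> mono (phi_ext \<phi>)"
  unfolding mono_def phi_ext_def
  by (auto intro!: orlicz_mono enn2real_mono simp: top_unique less_top)

lemma phi_ext_meas[measurable]: "orlicz \<phi> \<Longrightarrow> phi_ext \<phi> \<in> borel_measurable borel"
  by (rule mono_borel_ennreal[OF phi_ext_mono])

lemma phi_ext_0[simp]: "orlicz \<phi> \<Longrightarrow> phi_ext \<phi> 0 = 0"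
  unfolding phi_ext_def orlicz_def by simp

lemma phi_ext_top[simp]: "phi_ext \<phi> \<infinity> = \<infinity>"
  unfolding phi_ext_def by simp

lemma phi_ext_ennreal[simp]: "0 \<le> r \<Longrightarrow> phi_ext \<phi> (ennreal r) = \<phi> r"
  unfolding phi_ext_def by simp

lemma orlicz_superlin:
  assumes phi: "orlicz \<phi>" and c: "1 \<le> c" and y: "0 \<le> y"
  shows "ennreal c * \<phi> y \<le> \<phi> (c * y)"
proof -
  have "\<phi> ((1/c) * (c * y) + (1 - 1/c) * 0) \<le> ennreal (1/c) * \<phi> (c*y) + ennreal (1 - 1/c) * \<phi> 0"
    by (rule orlicz_convex[OF phi]) (use c y in auto)
  moreover have "(1/c) * (c * y) + (1 - 1/c) * 0 = y" using c by simp
  moreover have "\<phi> 0 = 0" using phi by (simp add: orlicz_def)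
  ultimately have "\<phi> y \<le> ennreal (1/c) * \<phi> (c*y)" by simp
  then have "ennreal c * \<phi> y \<le> ennreal c * (ennreal (1/c) * \<phi> (c*y))"
    by (rule mult_left_mono) simp
  also have "\<dots> = \<phi> (c*y)" using c
    by (simp add: mult.assoc[symmetric] ennreal_mult[symmetric] del: ennreal_mult')
  finally show ?thesis .
qed

lemma orlicz_real_convex:
  assumes phi: "orlicz \<phi>" and fin: "\<phi> b < \<infinity>"
  shows "convex_on {0..b} (\<lambda>y. enn2real (\<phi> y))"
proof (rule convex_onI)
  show "convex {0..b}" by simp
  fix t x y :: real assume t: "0 < t" "t < 1" and xy: "x \<in> {0..b}" "y \<in> {0..b}"
  have fx: "\<phi> x < \<infinity>" using orlicz_mono[OF phi, of x b] xy fin by auto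
  have fy: "\<phi> y < \<infinity>" using orlicz_mono[OF phi, of y b] xy fin by auto
  have "\<phi> ((1 - t) * x + (1 - (1 - t)) * y) \<le> ennreal (1 - t) * \<phi> x + ennreal (1 - (1 - t)) * \<phi> y"
    by (rule orlicz_convex[OF phi]) (use t xy in auto)
  then have "\<phi> ((1 - t) * x + t * y) \<le> ennreal (1 - t) * \<phi> x + ennreal t * \<phi> y" by simp
  then have "enn2real (\<phi> ((1 - t) * x + t * y)) \<le> enn2real (ennreal (1 - t) * \<phi> x + ennreal t * \<phi> y)"
    using fx fy by (intro enn2real_mono) (auto simp: ennreal_mult_less_top)
  also have "\<dots> = (1 - t) * enn2real (\<phi> x) + t * enn2real (\<phi> y)"
    using fx fy t by (simp add: enn2real_plus ennreal_mult_less_top enn2real_mult)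
  finally show "enn2real (\<phi> ((1 - t) *\<^sub>R x + t *\<^sub>R y)) \<le> (1 - t) * enn2real (\<phi> x) + t * enn2real (\<phi> y)"
    by simp
qed

lemma orlicz_subgrad:
  assumes phi: "orlicz \<phi>" and z: "0 < z" "z < y1" and fin: "\<phi> y1 < \<infinity>"
  obtains c where "0 \<le> c" "enn2real (\<phi> z) \<le> c * z"
    "\<And>y. 0 \<le> y \<Longrightarrow> ennreal (enn2real (\<phi> z)) + ennreal c * ennreal y \<le> \<phi> y + ennreal c * ennreal z"
proof -
  define g where "g y = enn2real (\<phi> y)" for y
  define c where "c = Inf ((\<lambda>t. (g z - g t) / (z - t)) ` ({z<..} \<inter> {0..y1}))"
  have cv: "convex_on {0..y1} g" unfolding g_def by (rule orlicz_real_convex[OF phi fin])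
  have low: "g z + c * (y - z) \<le> g y" if "0 \<le> y" "y \<le> y1" for y
    using convex_le_Inf_differential[OF cv, of z y] z that unfolding c_def by auto
  have fz: "\<phi> z < \<infinity>" using orlicz_mono[OF phi, of z y1] z fin by auto
  have g0: "g 0 = 0" using phi by (simp add: g_def orlicz_def)
  have gz: "g z \<le> c * z" using low[of 0] z g0 by (simp add: algebra_simps)
  have gzpos: "0 \<le> g z" by (simp add: g_def)
  have cpos: "0 \<le> c"
  proof (rule ccontr)
    assume "\<not> 0 \<le> c" then have "c * z < 0" using z by (simp add: mult_neg_pos)
    then show False using gz gzpos by linarith
  qed
  have low2: "g z + c * (y - z) \<le> g y" if y: "0 \<le> y" and fy: "\<phi> y < \<infinity>" for y
  proof (cases "y \<le> y1")
    case True then show ?thesis using low y by auto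
  next
    case False
    define t where "t = (y - y1) / (y - z)"
    have t01: "0 \<le> t" "t \<le> 1" using False z by (auto simp: t_def divide_simps)
    have ne: "y - z \<noteq> 0" using False z by auto
    have e: "(y - z) * t = y - y1" using ne by (simp add: t_def)
    have "(y - z) * (t * z + (1 - t) * y) = ((y-z)*t) * z + ((y - z) - (y-z)*t) * y"
      by (simp add: algebra_simps)
    also have "\<dots> = (y - z) * y1" unfolding e by (simp add: algebra_simps)
    finally have yy: "t * z + (1 - t) * y = y1" using ne by simp
    have "\<phi> (t * z + (1 - t) * y) \<le> ennreal t * \<phi> z + ennreal (1 - t) * \<phi> y"
      by (rule orlicz_convex[OF phi]) (use z y t01 in auto)
    then have "\<phi> y1 \<le> ennreal t * \<phi> z + ennreal (1 - t) * \<phi> y" by (simp add: yy)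
    then have "g y1 \<le> enn2real (ennreal t * \<phi> z + ennreal (1 - t) * \<phi> y)"
      unfolding g_def using fz fy by (intro enn2real_mono) (auto simp: ennreal_mult_less_top)
    also have "\<dots> = t * g z + (1 - t) * g y"
      using fz fy t01 by (simp add: g_def enn2real_plus ennreal_mult_less_top enn2real_mult)
    finally have A: "g y1 \<le> t * g z + (1 - t) * g y" .
    have B: "g z + c * (y1 - z) \<le> g y1" using low[of y1] z by auto
    have "(y - z) * (g z + c * (y1 - z)) \<le> (y - z) * (t * g z + (1 - t) * g y)"
      using A B False z by (intro mult_left_mono) auto
    also have "(y - z) * (t * g z + (1 - t) * g y) = ((y-z)*t) * g z + ((y - z) - (y-z)*t) * g y"
      by (simp add: algebra_simps)
    also have "\<dots> = (y - y1) * g z + (y1 - z) * g y" unfolding e by (simp add: algebra_simps)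
    finally have C: "(y - z) * (g z + c * (y1 - z)) \<le> (y - y1) * g z + (y1 - z) * g y" .
    have "(y1 - z) * (g z + c * (y - z)) \<le> (y1 - z) * g y"
      using C by (simp add: algebra_simps)
    then show ?thesis using z by (simp add: mult_le_cancel_left)
  qed
  show ?thesis
  proof (rule that[OF cpos])
    show "enn2real (\<phi> z) \<le> c * z" using gz by (simp add: g_def)
    fix y :: real assume y: "0 \<le> y"
    show "ennreal (enn2real (\<phi> z)) + ennreal c * ennreal y \<le> \<phi> y + ennreal c * ennreal z"
    proof (cases "\<phi> y = \<infinity>")
      case True then show ?thesis by simp
    next
      case False
      then have fy: "\<phi> y < \<infinity>" by (simp add: less_top)
      have "g z + c * y \<le> g y + c * z" using low2[OF y fy] by (simp add: algebra_simps)
      then have le: "ennreal (g z + c * y) \<le> ennreal (g y + c * z)" by (rule ennreal_leI)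
      have gy: "ennreal (g y) = \<phi> y" using fy by (simp add: g_def less_top)
      have e1: "ennreal (g z) + ennreal c * ennreal y = ennreal (g z + c*y)"
        using cpos gzpos y by (simp add: ennreal_mult ennreal_plus)
      have e3: "ennreal (g y + c*z) = ennreal (g y) + ennreal c * ennreal z"
        using cpos z by (simp add: ennreal_mult ennreal_plus g_def)
      have e2: "\<phi> y + ennreal c * ennreal z = ennreal (g y + c*z)"
        unfolding e3 gy ..
      show ?thesis using le unfolding g_def[symmetric] e1 e2 .
    qed
  qed
qed

lemma jensen_key:
  assumes phi: "orlicz \<phi>" and [measurable]: "\<psi> \<in> borel_measurable M" "K \<in> borel_measurable M"
    and mass: "(\<integral>\<^sup>+x. K x \<partial>M) \<le> 1"
    and z: "0 < z" "ennreal z < (\<integral>\<^sup>+x. \<psi> x * K x \<partial>M)"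
  shows "\<phi> z \<le> (\<integral>\<^sup>+x. phi_ext \<phi> (\<psi> x) * K x \<partial>M)"
proof -
  define R where "R = (\<integral>\<^sup>+x. phi_ext \<phi> (\<psi> x) * K x \<partial>M)"
  define y0 where "y0 = (\<integral>\<^sup>+x. \<psi> x * K x \<partial>M)"
  define \<mu> where "\<mu> = (\<integral>\<^sup>+x. K x \<partial>M)"
  have phimeas[measurable]: "phi_ext \<phi> \<in> borel_measurable borel" using phi by (rule phi_ext_meas)
  show ?thesis
  proof (cases "\<exists>y1>z. \<phi> y1 < \<infinity>")
    case True
    then obtain y1 where y1: "z < y1" "\<phi> y1 < \<infinity>" by blast
    obtain c where c: "0 \<le> c" "enn2real (\<phi> z) \<le> c * z"
      "\<And>y. 0 \<le> y \<Longrightarrow> ennreal (enn2real (\<phi> z)) + ennreal c * ennreal y \<le> \<phi> y + ennreal c * ennreal z"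
      using orlicz_subgrad[OF phi z(1) y1] by blast
    define gz where "gz = enn2real (\<phi> z)"
    have fz: "\<phi> z < \<infinity>" using orlicz_mono[OF phi, of z y1] z y1 by auto
    have phiz: "\<phi> z = ennreal gz" using fz by (simp add: gz_def less_top)
    have gz0: "0 \<le> gz" by (simp add: gz_def)
    have pw: "ennreal gz + ennreal c * y \<le> phi_ext \<phi> y + ennreal c * ennreal z" for y :: ennreal
    proof (cases y)
      case (real r)
      then show ?thesis using c(3)[of r] by (simp add: gz_def)
    next
      case top then show ?thesis by (simp add: phi_ext_def)
    qed
    have "(\<integral>\<^sup>+x. (ennreal gz + ennreal c * \<psi> x) * K x \<partial>M)
        \<le> (\<integral>\<^sup>+x. (phi_ext \<phi> (\<psi> x) + ennreal c * ennreal z) * K x \<partial>M)"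
      by (intro nn_integral_mono mult_right_mono pw) simp
    also have "\<dots> = R + ennreal (c * z) * \<mu>"
      unfolding R_def \<mu>_def distrib_right
      using c(1) z by (simp add: nn_integral_add nn_integral_cmult mult.assoc ennreal_mult)
    also have "(\<integral>\<^sup>+x. (ennreal gz + ennreal c * \<psi> x) * K x \<partial>M) = ennreal gz * \<mu> + ennreal c * y0"
      unfolding y0_def \<mu>_def distrib_right
      by (simp add: nn_integral_add nn_integral_cmult mult.assoc)
    finally have ineq: "ennreal gz * \<mu> + ennreal c * y0 \<le> R + ennreal (c * z) * \<mu>" .
    show ?thesis
    proof (cases "R = \<infinity>")
      case True then show ?thesis by (simp add: R_def)
    next
      case Rfin: False
      have mu1: "\<mu> \<le> 1" using mass by (simp add: \<mu>_def)
      then have mufin: "\<mu> \<noteq> \<infinity>" by (auto simp: top_unique)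
      obtain mr where mr: "\<mu> = ennreal mr" "0 \<le> mr" using mufin by (cases \<mu>) auto
      have mr1: "mr \<le> 1" using mu1 mr by (simp add: ennreal_le_1)
      obtain Rr where Rr: "R = ennreal Rr" "0 \<le> Rr" using Rfin by (cases R) auto
      show ?thesis
      proof (cases "c = 0")
        case True
        then have "gz \<le> 0" using c(2) by (simp add: gz_def)
        then have "\<phi> z = 0" using phiz gz0 by simp
        then show ?thesis by simp
      next
        case cne: False
        have y0fin: "y0 \<noteq> \<infinity>"
        proof
          assume "y0 = \<infinity>"
          then have "ennreal c * y0 = \<infinity>" using cne c(1) by (simp add: ennreal_mult_top)
          then have "R + ennreal (c * z) * \<mu> = \<infinity>" using ineq by (simp add: top_unique)
          then show False using Rfin mufin by (simp add: ennreal_mult_eq_top_iff)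
        qed
        obtain yr where yr: "y0 = ennreal yr" "0 \<le> yr" using y0fin by (cases y0) auto
        have "ennreal z < ennreal yr" using z(2) yr by (simp add: y0_def)
        then have zy: "z < yr" using z(1) by (simp add: ennreal_less_iff)
        have e1: "ennreal (gz * mr + c * yr) = ennreal gz * ennreal mr + ennreal c * ennreal yr"
          using gz0 mr(2) yr(2) c(1) by (simp add: ennreal_mult ennreal_plus)
        have e2: "ennreal (Rr + c * z * mr) = ennreal Rr + ennreal (c * z) * ennreal mr"
          using Rr(2) mr(2) z c(1) by (simp add: ennreal_mult ennreal_plus)
        have "ennreal (gz * mr + c * yr) \<le> ennreal (Rr + c * z * mr)"
          using ineq unfolding mr yr Rr e1 e2 .
        then have re: "gz * mr + c * yr \<le> Rr + c * z * mr"
          using Rr c(1) z mr by (subst (asm) ennreal_le_iff) auto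
        have "gz = gz * mr + gz * (1 - mr)" by (simp add: algebra_simps)
        also have "\<dots> \<le> gz * mr + (c * z) * (1 - mr)"
          using c(2) mr1 by (simp add: gz_def mult_right_mono)
        also have "\<dots> \<le> gz * mr + c * (yr - z * mr)"
        proof -
          have "z * (1 - mr) \<le> yr - z * mr" using zy by (simp add: algebra_simps)
          then show ?thesis using c(1) by (simp add: mult.assoc mult_left_mono)
        qed
        also have "\<dots> \<le> Rr" using re by (simp add: algebra_simps)
        finally have "gz \<le> Rr" .
        then show ?thesis unfolding phiz using Rr by (simp add: R_def[symmetric])
      qed
    qed
  next
    case False
    have inf: "\<phi> y = \<infinity>" if "z < y" for y
    proof (rule ccontr)
      assume "\<phi> y \<noteq> \<infinity>"
      then have "\<phi> y < \<infinity>" by (simp add: less_top)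
      then have "\<exists>y1>z. \<phi> y1 < \<infinity>" using that by (intro exI[of _ y]) simp
      then show False using False by (rule notE[rotated])
    qed
    show ?thesis
    proof (cases "R = \<infinity>")
      case True then show ?thesis by (simp add: R_def)
    next
      case Rfin: False
      have meas2: "(\<lambda>x. phi_ext \<phi> (\<psi> x) * K x) \<in> borel_measurable M" by measurable
      have "AE x in M. phi_ext \<phi> (\<psi> x) * K x \<noteq> \<infinity>"
        using nn_integral_PInf_AE[OF meas2] Rfin unfolding R_def by blast
      moreover have "\<psi> x * K x \<le> ennreal z * K x" if h: "phi_ext \<phi> (\<psi> x) * K x \<noteq> \<infinity>" for x
      proof (cases "K x = 0")
        case True then show ?thesis by simp
      next
        case False
        then have pf: "phi_ext \<phi> (\<psi> x) \<noteq> \<infinity>" using h by (auto simp: ennreal_mult_eq_top_iff)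
        then have "\<psi> x \<noteq> \<infinity>" by (metis phi_ext_top)
        then obtain r where r: "\<psi> x = ennreal r" "0 \<le> r" by (cases "\<psi> x") auto
        have "\<phi> r \<noteq> \<infinity>" using pf unfolding r(1) phi_ext_ennreal[OF r(2)] .
        then have "r \<le> z" using inf not_le by metis
        then show ?thesis unfolding r(1) by (intro mult_right_mono ennreal_leI) auto
      qed
      ultimately have "AE x in M. \<psi> x * K x \<le> ennreal z * K x" by (auto elim: AE_mp)
      then have "y0 \<le> (\<integral>\<^sup>+x. ennreal z * K x \<partial>M)" unfolding y0_def by (rule nn_integral_mono_AE)
      also have "\<dots> = ennreal z * \<mu>" unfolding \<mu>_def by (rule nn_integral_cmult) simp
      also have "\<dots> \<le> ennreal z * 1" unfolding \<mu>_def by (rule mult_left_mono[OF mass]) simp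
      finally have "y0 \<le> ennreal z" by simp
      then have False using z(2) unfolding y0_def by simp
      then show ?thesis ..
    qed
  qed
qed


lemma jensen_orlicz:
  assumes phi: "orlicz \<phi>" and [measurable]: "\<psi> \<in> borel_measurable M" "K \<in> borel_measurable M"
    and mass: "(\<integral>\<^sup>+x. K x \<partial>M) \<le> 1"
  shows "phi_ext \<phi> (\<integral>\<^sup>+x. \<psi> x * K x \<partial>M) \<le> (\<integral>\<^sup>+x. phi_ext \<phi> (\<psi> x) * K x \<partial>M)"
proof -
  define R where "R = (\<integral>\<^sup>+x. phi_ext \<phi> (\<psi> x) * K x \<partial>M)"
  define y0 where "y0 = (\<integral>\<^sup>+x. \<psi> x * K x \<partial>M)"
  have key: "\<phi> z \<le> R" if "0 < z" "ennreal z < y0" for z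
    using jensen_key[OF phi assms(2,3) mass that(1)] that(2) by (simp add: R_def y0_def)
  show ?thesis
  proof (cases y0)
    case (real r)
    show ?thesis
    proof (cases "r = 0")
      case True then show ?thesis using real phi by (simp add: y0_def[symmetric])
    next
      case False
      then have r0: "0 < r" using real by simp
      have "\<phi> r \<le> R"
      proof (rule ccontr)
        assume "\<not> \<phi> r \<le> R"
        then have "R < \<phi> r" by simp
        also have "\<phi> r \<le> Liminf (at r within {0..}) \<phi>" using phi r0 by (simp add: orlicz_def)
        finally have "eventually (\<lambda>z. R < \<phi> z) (at r within {0..})" by (rule less_LiminfD)
        then obtain d where d: "d > 0" "\<And>z. z \<in> {0..} \<Longrightarrow> z \<noteq> r \<Longrightarrow> dist z r < d \<Longrightarrow> R < \<phi> z"
          unfolding eventually_at by blast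
        define z where "z = max (r/2) (r - d/2)"
        have z: "0 < z" "z < r" "dist z r < d" using r0 d(1) by (auto simp: z_def dist_real_def)
        have "R < \<phi> z" using d(2)[of z] z by auto
        moreover have "\<phi> z \<le> R" using key[of z] z real by (simp add: ennreal_less_iff)
        ultimately show False by simp
      qed
      then show ?thesis using real by (simp add: y0_def[symmetric] R_def[symmetric])
    qed
  next
    case top
    have "R = \<infinity>"
    proof (rule ccontr)
      assume "R \<noteq> \<infinity>"
      then have "R < \<infinity>" by (simp add: less_top)
      moreover have "(\<phi> \<longlongrightarrow> \<infinity>) at_top" using phi by (simp add: orlicz_def)
      ultimately have "eventually (\<lambda>z. R < \<phi> z) at_top" by (rule order_tendstoD(1)[rotated])
      then obtain N where N: "\<And>z. z \<ge> N \<Longrightarrow> R < \<phi> z" unfolding eventually_at_top_linorder by blast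
      define z where "z = max N 1"
      have "R < \<phi> z" using N[of z] by (simp add: z_def)
      moreover have "\<phi> z \<le> R" using key[of z] top by (simp add: z_def)
      ultimately show False by simp
    qed
    then show ?thesis by (simp add: R_def)
  qed
qed

lemma psf_lborel: "product_sigma_finite (\<lambda>_::nat. lborel :: real measure)"
  by (simp add: product_sigma_finite_def sigma_finite_lborel)

lemma sf_PM: "sigma_finite_measure (PiM I (\<lambda>_::nat. lborel :: real measure))" if "finite I"
  using product_sigma_finite.sigma_finite[OF psf_lborel that] .

lemma atLeastLessThan_insert_low: "j < n \<Longrightarrow> {j..<n} = insert j {Suc j..<(n::nat)}"
  by auto

locale KS =
  fixes n :: nat and chi :: "(nat \<Rightarrow> real) \<Rightarrow> real" and w :: real and M :: real
  assumes w: "w > 0" and Mpos: "M > 0" and chi_meas[measurable]: "chi \<in> borel_measurable (lebn n)"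
begin

abbreviation PM :: "nat \<Rightarrow> (nat \<Rightarrow> real) measure" where
  "PM j \<equiv> PiM {j..<n} (\<lambda>_. lborel)"

primrec Lf :: "nat \<Rightarrow> (nat \<Rightarrow> real) \<Rightarrow> ennreal" where
  "Lf 0 v = ennreal (\<bar>chi (restrict v {..<n})\<bar> / M)"
| "Lf (Suc j) v = (\<integral>\<^sup>+u. Lf j (v(j:=u)) \<partial>lborel)"

definition Kk :: "nat \<Rightarrow> (nat \<Rightarrow> real) \<Rightarrow> (nat \<Rightarrow> real) \<Rightarrow> ennreal" where
  "Kk j x t = ennreal (w ^ (n - j)) * Lf j (\<lambda>i. w * x i - of_int \<lfloor>w * t i\<rfloor>)"

lemma Lf_cong: "(\<And>i. j \<le> i \<Longrightarrow> i < n \<Longrightarrow> v i = v' i) \<Longrightarrow> Lf j v = Lf j v'"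
proof (induction j arbitrary: v v')
  case 0
  have "restrict v {..<n} = restrict v' {..<n}" using 0 by (auto simp: restrict_def)
  then show ?case by simp
next
  case (Suc j)
  have "Lf j (v(j:=u)) = Lf j (v'(j:=u))" for u
    by (rule Suc.IH) (use Suc.prems in auto)
  then show ?case by simp
qed

lemma Lf_restrict: "Lf j v = Lf j (restrict v {j..<n})"
  by (rule Lf_cong) auto

lemma Lf_meas: "j \<le> n \<Longrightarrow> Lf j \<in> borel_measurable (PM j)"
proof (induction j)
  case 0
  have "(\<lambda>v. ennreal (\<bar>chi v\<bar> / M)) \<in> borel_measurable (lebn n)" by measurable
  then have "(\<lambda>v. ennreal (\<bar>chi v\<bar> / M)) \<in> borel_measurable (PM 0)"
    by (simp add: lebn_def atLeast0LessThan)
  then show ?case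
  proof (rule measurable_cong[THEN iffD1, rotated])
    fix v assume "v \<in> space (PM 0)"
    then have "restrict v {..<n} = v" by (auto simp: space_PiM PiE_def extensional_def)
    then show "ennreal (\<bar>chi v\<bar> / M) = Lf 0 v" by simp
  qed
next
  case (Suc j)
  then have jn: "j < n" by simp
  have ins: "{j..<n} = insert j {Suc j..<n}" using jn by auto
  have m1: "Lf j \<in> borel_measurable (PiM (insert j {Suc j..<n}) (\<lambda>_. lborel))"
    using Suc.IH jn ins by simp
  have "(\<lambda>(v, u). Lf j (v(j:=u))) \<in> borel_measurable (PM (Suc j) \<Otimes>\<^sub>M lborel)"
    using measurable_comp[OF measurable_add_dim m1] by (simp add: comp_def case_prod_beta)
  then show ?case by (simp add: lborel.borel_measurable_nn_integral)
qed

lemma Lf_meas_comp: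
  assumes "j \<le> n" and "(\<lambda>z. restrict (G z) {j..<n}) \<in> measurable N (PM j)"
  shows "(\<lambda>z. Lf j (G z)) \<in> borel_measurable N"
proof -
  have "(\<lambda>z. Lf j (restrict (G z) {j..<n})) \<in> borel_measurable N"
    using measurable_comp[OF assms(2) Lf_meas[OF assms(1)]] by (simp add: comp_def)
  then show ?thesis by (subst Lf_restrict) simp
qed

lemma Kk_meas_t: "j \<le> n \<Longrightarrow> i \<le> j \<Longrightarrow> Kk j y \<in> borel_measurable (PM i)"
  unfolding Kk_def
  by (intro borel_measurable_times_ennreal borel_measurable_const Lf_meas_comp measurable_restrict)
     (auto intro!: measurable_component_singleton)

lemma Kk_meas_st: "j \<le> n \<Longrightarrow> (\<lambda>(s, t). Kk j (x(j:=s)) t) \<in> borel_measurable (lborel \<Otimes>\<^sub>M PM j)"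
proof -
  assume jn: "j \<le> n"
  have comp: "(\<lambda>z. w * (x(j := fst z)) i - real_of_int \<lfloor>w * snd z i\<rfloor>) \<in> borel_measurable (lborel \<Otimes>\<^sub>M PM j)"
    if i: "i \<in> {j..<n}" for i
  proof (cases "i = j")
    case True
    then show ?thesis using i by simp
  next
    case False
    then show ?thesis using i by simp
  qed
  have "(\<lambda>z. Lf j (\<lambda>i. w * (x(j := fst z)) i - real_of_int \<lfloor>w * snd z i\<rfloor>)) \<in> borel_measurable (lborel \<Otimes>\<^sub>M PM j)"
    by (rule Lf_meas_comp[OF jn], rule measurable_restrict) (simp add: comp measurable_lborel2)
  then show ?thesis unfolding Kk_def case_prod_beta by simp
qed

lemma Kk_int:
  assumes jn: "j < n"
  shows "(\<integral>\<^sup>+s. Kk j (x(j:=s)) t \<partial>lborel) = Kk (Suc j) x t"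
proof -
  define V where "V = (\<lambda>i. w * x i - real_of_int \<lfloor>w * t i\<rfloor>)"
  define k where "k = real_of_int \<lfloor>w * t j\<rfloor>"
  define f where "f u = Lf j (V(j:=u))" for u
  have fm[measurable]: "f \<in> borel_measurable borel"
    unfolding f_def using jn
    by (intro Lf_meas_comp measurable_restrict) (auto simp: V_def)
  have eq: "(\<lambda>i. w * (x(j:=s)) i - real_of_int \<lfloor>w * t i\<rfloor>) = V(j := -k + w * s)" for s
    by (auto simp: V_def k_def)
  have fm2: "(\<lambda>s. f (-k + w * s)) \<in> borel_measurable lborel" by measurable
  have "(\<integral>\<^sup>+s. Kk j (x(j:=s)) t \<partial>lborel) = (\<integral>\<^sup>+s. ennreal (w ^ (n - j)) * f (-k + w * s) \<partial>lborel)"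
    unfolding Kk_def eq f_def ..
  also have "\<dots> = ennreal (w ^ (n - j)) * (\<integral>\<^sup>+s. f (-k + w * s) \<partial>lborel)"
    by (rule nn_integral_cmult[OF fm2])
  also have "(\<integral>\<^sup>+s. f (-k + w * s) \<partial>lborel) = ennreal (1 / w) * (\<integral>\<^sup>+u. f u \<partial>lborel)"
  proof -
    have "(\<integral>\<^sup>+u. f u \<partial>lborel) = ennreal w * (\<integral>\<^sup>+s. f (-k + w * s) \<partial>lborel)"
      using nn_integral_real_affine[OF fm, of w "-k"] w by simp
    then have "ennreal (1/w) * (\<integral>\<^sup>+u. f u \<partial>lborel) = ennreal (1/w) * ennreal w * (\<integral>\<^sup>+s. f (-k + w * s) \<partial>lborel)"
      by (simp add: mult.assoc)
    also have "ennreal (1/w) * ennreal w = 1" using w by (simp add: ennreal_mult[symmetric] del: ennreal_mult')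
    finally show ?thesis by simp
  qed
  also have "(\<integral>\<^sup>+u. f u \<partial>lborel) = Lf (Suc j) V" by (simp add: f_def)
  also have "ennreal (w ^ (n - j)) * (ennreal (1 / w) * Lf (Suc j) V) = ennreal (w ^ (n - Suc j)) * Lf (Suc j) V"
  proof -
    have "w ^ (n - j) * (1 / w) = w ^ (n - Suc j)" using jn w
      by (metis Suc_diff_Suc nonzero_mult_div_cancel_left power_Suc times_divide_eq_right mult_1_right less_irrefl)
    then show ?thesis using w by (simp add: mult.assoc[symmetric] ennreal_mult[symmetric] del: ennreal_mult')
  qed
  finally show ?thesis by (simp add: Kk_def V_def)
qed

end

context KS begin

lemma Psi_meas:
  assumes phis: "\<forall>i<n. orlicz (\<Phi> i)" and Fm[measurable]: "F \<in> borel_measurable (lebn n)"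
  shows "j \<le> n \<Longrightarrow> modG j \<Phi> F \<in> borel_measurable (PM j)"
proof (induction j)
  case 0
  have "(\<lambda>t. ennreal \<bar>F t\<bar>) \<in> borel_measurable (lebn n)" by measurable
  then show ?case by (simp add: lebn_def atLeast0LessThan)
next
  case (Suc j)
  then have jn: "j < n" by simp
  have ins: "{j..<n} = insert j {Suc j..<n}" using jn by auto
  have m1: "modG j \<Phi> F \<in> borel_measurable (PiM (insert j {Suc j..<n}) (\<lambda>_. lborel))"
    using Suc.IH jn ins by simp
  have ph[measurable]: "phi_ext (\<Phi> j) \<in> borel_measurable borel" using phis jn by (simp add: phi_ext_meas)
  have "(\<lambda>(v, u). modG j \<Phi> F (v(j:=u))) \<in> borel_measurable (PM (Suc j) \<Otimes>\<^sub>M lborel)"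
    using measurable_comp[OF measurable_add_dim m1] by (simp add: comp_def case_prod_beta)
  then have "(\<lambda>(v, u). phi_ext (\<Phi> j) (modG j \<Phi> F (v(j:=u)))) \<in> borel_measurable (PM (Suc j) \<Otimes>\<^sub>M lborel)"
    using measurable_comp[OF _ ph] by (simp add: comp_def case_prod_beta)
  then show ?case by (simp add: lborel.borel_measurable_nn_integral)
qed

lemma main_ind:
  assumes phis: "\<forall>i<n. orlicz (\<Phi> i)" and Fm[measurable]: "F \<in> borel_measurable (lebn n)"
    and mass: "\<And>j x. j \<le> n \<Longrightarrow> (\<integral>\<^sup>+t. Kk j x t \<partial>PM j) \<le> 1"
    and base: "\<And>x. ennreal \<bar>g x\<bar> \<le> (\<integral>\<^sup>+t. modG 0 \<Phi> F t * Kk 0 x t \<partial>PM 0)"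
  shows "j \<le> n \<Longrightarrow> modG j \<Phi> g x \<le> (\<integral>\<^sup>+t. modG j \<Phi> F t * Kk j x t \<partial>PM j)"
proof (induction j arbitrary: x)
  case 0
  then show ?case using base by simp
next
  case (Suc j)
  then have jn: "j < n" by simp
  have phi: "orlicz (\<Phi> j)" using phis jn by simp
  have ph[measurable]: "phi_ext (\<Phi> j) \<in> borel_measurable borel" using phi by (simp add: phi_ext_meas)
  have Pm[measurable]: "modG j \<Phi> F \<in> borel_measurable (PM j)" using Psi_meas[OF phis Fm] jn by simp
  have Km: "Kk j y \<in> borel_measurable (PM j)" for y using Kk_meas_t jn by simp
  have Km2: "Kk (Suc j) y \<in> borel_measurable (PM j)" for y using Kk_meas_t[of "Suc j" j] jn by simp
  have Kst: "(\<lambda>(s, t). Kk j (x(j:=s)) t) \<in> borel_measurable (lborel \<Otimes>\<^sub>M PM j)"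
    using Kk_meas_st jn by simp
  interpret PJ: sigma_finite_measure "PM j" by (rule sf_PM) simp
  interpret pair: pair_sigma_finite lborel "PM j" by standard
  have "modG (Suc j) \<Phi> g x = (\<integral>\<^sup>+s. phi_ext (\<Phi> j) (modG j \<Phi> g (x(j:=s))) \<partial>lborel)" by simp
  also have "\<dots> \<le> (\<integral>\<^sup>+s. phi_ext (\<Phi> j) (\<integral>\<^sup>+t. modG j \<Phi> F t * Kk j (x(j:=s)) t \<partial>PM j) \<partial>lborel)"
    by (intro nn_integral_mono monoD[OF phi_ext_mono[OF phi]] Suc.IH) (use jn in simp)
  also have "\<dots> \<le> (\<integral>\<^sup>+s. (\<integral>\<^sup>+t. phi_ext (\<Phi> j) (modG j \<Phi> F t) * Kk j (x(j:=s)) t \<partial>PM j) \<partial>lborel)"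
    by (intro nn_integral_mono jensen_orlicz[OF phi Pm Km] mass) (use jn in simp)
  also have "\<dots> = (\<integral>\<^sup>+t. (\<integral>\<^sup>+s. phi_ext (\<Phi> j) (modG j \<Phi> F t) * Kk j (x(j:=s)) t \<partial>lborel) \<partial>PM j)"
  proof (rule pair.Fubini'[symmetric])
    have "(\<lambda>(s, t). phi_ext (\<Phi> j) (modG j \<Phi> F t)) \<in> borel_measurable (lborel \<Otimes>\<^sub>M PM j)" by measurable
    then show "(\<lambda>(s, t). phi_ext (\<Phi> j) (modG j \<Phi> F t) * Kk j (x(j:=s)) t) \<in> borel_measurable (lborel \<Otimes>\<^sub>M PM j)"
      using Kst by (simp add: case_prod_beta)
  qed
  also have "\<dots> = (\<integral>\<^sup>+t. phi_ext (\<Phi> j) (modG j \<Phi> F t) * Kk (Suc j) x t \<partial>PM j)"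
  proof (rule nn_integral_cong)
    fix t assume t: "t \<in> space (PM j)"
    have "(\<lambda>s. Kk j (x(j:=s)) t) \<in> borel_measurable lborel"
      using measurable_comp[OF measurable_Pair2'[OF t] Kst] by (simp add: comp_def)
    then show "(\<integral>\<^sup>+s. phi_ext (\<Phi> j) (modG j \<Phi> F t) * Kk j (x(j:=s)) t \<partial>lborel)
        = phi_ext (\<Phi> j) (modG j \<Phi> F t) * Kk (Suc j) x t"
      by (simp add: nn_integral_cmult Kk_int[OF jn])
  qed
  also have "\<dots> = (\<integral>\<^sup>+t'. (\<integral>\<^sup>+\<tau>. phi_ext (\<Phi> j) (modG j \<Phi> F (t'(j:=\<tau>))) * Kk (Suc j) x (t'(j:=\<tau>)) \<partial>lborel) \<partial>PM (Suc j))"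
  proof -
    have ins: "{j..<n} = insert j {Suc j..<n}" using jn by auto
    have "(\<lambda>t. phi_ext (\<Phi> j) (modG j \<Phi> F t) * Kk (Suc j) x t) \<in> borel_measurable (PM j)"
      using borel_measurable_times_ennreal[OF measurable_comp[OF Pm ph] Km2] by (simp add: comp_def)
    then show ?thesis unfolding ins
      by (subst product_sigma_finite.product_nn_integral_insert[OF psf_lborel]) auto
  qed
  also have "\<dots> = (\<integral>\<^sup>+t'. modG (Suc j) \<Phi> F t' * Kk (Suc j) x t' \<partial>PM (Suc j))"
  proof (rule nn_integral_cong)
    fix t' assume t': "t' \<in> space (PM (Suc j))"
    have kk: "Kk (Suc j) x (t'(j:=\<tau>)) = Kk (Suc j) x t'" for \<tau>
      unfolding Kk_def by (intro arg_cong2[where f="(*)"] refl Lf_cong) auto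
    have "(\<lambda>\<tau>. phi_ext (\<Phi> j) (modG j \<Phi> F (t'(j:=\<tau>)))) \<in> borel_measurable lborel"
    proof -
      have "(\<lambda>\<tau>. t'(j:=\<tau>)) \<in> measurable lborel (PM j)"
        using measurable_component_update[OF t', of j] jn by (simp add: atLeastLessThan_insert_low)
      then show ?thesis using Pm by measurable
    qed
    then show "(\<integral>\<^sup>+\<tau>. phi_ext (\<Phi> j) (modG j \<Phi> F (t'(j:=\<tau>))) * Kk (Suc j) x (t'(j:=\<tau>)) \<partial>lborel)
        = modG (Suc j) \<Phi> F t' * Kk (Suc j) x t'"
      unfolding kk by (simp add: nn_integral_multc)
  qed
  finally show ?case .
qed

end

lemma count_int_indicator:
  fixes c :: int
  shows "(\<integral>\<^sup>+k. g k * indicator {c} k \<partial>count_space UNIV) = g c"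
  by simp

lemma A1:
  fixes g :: "int \<Rightarrow> ennreal" and w \<sigma> :: real
  assumes w: "w > 0"
  shows "(\<integral>\<^sup>+\<tau>. g \<lfloor>w * \<tau>\<rfloor> \<partial>lborel) = ennreal (1/w) * (\<integral>\<^sup>+k. g k \<partial>count_space UNIV)"
proof -
  have ind: "indicator {real_of_int k / w ..< (real_of_int k + 1) / w} \<tau> = (indicator {\<lfloor>w * \<tau>\<rfloor>} k :: ennreal)"
    for k \<tau>
  proof -
    have "(real_of_int k / w \<le> \<tau> \<and> \<tau> < (real_of_int k + 1) / w) \<longleftrightarrow> (real_of_int k \<le> w * \<tau> \<and> w * \<tau> < real_of_int k + 1)"
      using w by (simp add: field_simps)
    also have "\<dots> \<longleftrightarrow> \<lfloor>w * \<tau>\<rfloor> = k" by linarith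
    finally show ?thesis by (auto simp: indicator_def)
  qed
  have "(\<integral>\<^sup>+\<tau>. g \<lfloor>w * \<tau>\<rfloor> \<partial>lborel)
      = (\<integral>\<^sup>+\<tau>. (\<integral>\<^sup>+k. g k * indicator {real_of_int k / w ..< (real_of_int k + 1) / w} \<tau> \<partial>count_space UNIV) \<partial>lborel)"
    unfolding ind by simp
  also have "\<dots> = (\<integral>\<^sup>+k. (\<integral>\<^sup>+\<tau>. g k * indicator {real_of_int k / w ..< (real_of_int k + 1) / w} \<tau> \<partial>lborel) \<partial>count_space UNIV)"
    by (rule nn_integral_count_space_nn_integral) auto
  also have "\<dots> = (\<integral>\<^sup>+k. g k * ennreal (1/w) \<partial>count_space UNIV)"
  proof (rule nn_integral_cong)
    fix k :: int
    have "(real_of_int k + 1) / w - real_of_int k / w = 1 / w" using w by (simp add: field_simps)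
    moreover have "real_of_int k / w \<le> (real_of_int k + 1) / w" using w by (simp add: divide_right_mono)
    ultimately show "(\<integral>\<^sup>+\<tau>. g k * indicator {real_of_int k / w ..< (real_of_int k + 1) / w} \<tau> \<partial>lborel) = g k * ennreal (1/w)"
      by (simp add: nn_integral_cmult_indicator)
  qed
  also have "\<dots> = ennreal (1/w) * (\<integral>\<^sup>+k. g k \<partial>count_space UNIV)"
    by (simp add: nn_integral_multc mult.commute)
  finally show ?thesis .
qed

lemma B1:
  fixes H :: "real \<Rightarrow> ennreal"
  assumes Hm[measurable]: "H \<in> borel_measurable borel"
  shows "(\<integral>\<^sup>+\<sigma>. H \<sigma> \<partial>lborel) = (\<integral>\<^sup>+\<sigma>. (\<integral>\<^sup>+k. H (\<sigma> - real_of_int k) \<partial>count_space UNIV) * indicator {0..<1} \<sigma> \<partial>lborel)"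
proof -
  have ind: "indicator {- real_of_int k ..< 1 - real_of_int k} u = (indicator {- \<lfloor>u\<rfloor>} k :: ennreal)" for k u
  proof -
    have "(- real_of_int k \<le> u \<and> u < 1 - real_of_int k) \<longleftrightarrow> \<lfloor>u\<rfloor> = - k" by linarith
    then show ?thesis by (auto simp: indicator_def)
  qed
  have "(\<integral>\<^sup>+\<sigma>. (\<integral>\<^sup>+k. H (\<sigma> - real_of_int k) \<partial>count_space UNIV) * indicator {0..<1} \<sigma> \<partial>lborel)
     = (\<integral>\<^sup>+\<sigma>. (\<integral>\<^sup>+k. H (\<sigma> - real_of_int k) * indicator {0..<1} \<sigma> \<partial>count_space UNIV) \<partial>lborel)"
    by (simp add: nn_integral_multc)
  also have "\<dots> = (\<integral>\<^sup>+k. (\<integral>\<^sup>+\<sigma>. H (\<sigma> - real_of_int k) * indicator {0..<1} \<sigma> \<partial>lborel) \<partial>count_space UNIV)"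
    by (rule nn_integral_count_space_nn_integral) auto
  also have "\<dots> = (\<integral>\<^sup>+k. (\<integral>\<^sup>+u. H u * indicator {- real_of_int k ..< 1 - real_of_int k} u \<partial>lborel) \<partial>count_space UNIV)"
  proof (rule nn_integral_cong)
    fix k :: int
    define G where "G u = H u * indicator {- real_of_int k ..< 1 - real_of_int k} u" for u
    have Gm: "G \<in> borel_measurable borel" unfolding G_def by measurable
    have "(\<integral>\<^sup>+u. G u \<partial>lborel) = ennreal \<bar>1\<bar> * (\<integral>\<^sup>+\<sigma>. G (- real_of_int k + 1 * \<sigma>) \<partial>lborel)"
      by (rule nn_integral_real_affine[OF Gm]) simp
    also have "(\<lambda>\<sigma>. G (- real_of_int k + 1 * \<sigma>)) = (\<lambda>\<sigma>. H (\<sigma> - real_of_int k) * indicator {0..<1} \<sigma>)"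
      by (auto simp: G_def indicator_def fun_eq_iff)
    finally show "(\<integral>\<^sup>+\<sigma>. H (\<sigma> - real_of_int k) * indicator {0..<1} \<sigma> \<partial>lborel) = (\<integral>\<^sup>+u. H u * indicator {- real_of_int k ..< 1 - real_of_int k} u \<partial>lborel)"
      by (simp add: G_def)
  qed
  also have "\<dots> = (\<integral>\<^sup>+u. (\<integral>\<^sup>+k. H u * indicator {- real_of_int k ..< 1 - real_of_int k} u \<partial>count_space UNIV) \<partial>lborel)"
    by (rule nn_integral_count_space_nn_integral[symmetric]) auto
  also have "\<dots> = (\<integral>\<^sup>+u. H u \<partial>lborel)"
    unfolding ind by simp
  finally show ?thesis by simp
qed

context KS begin

lemma inv_w: "ennreal (1/w) * ennreal w = 1" "ennreal w * ennreal (1/w) = 1"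
  using w by (simp_all add: ennreal_mult[symmetric] del: ennreal_mult')

lemma mass_step:
  assumes jn: "j < n" and IH: "\<And>y. (\<integral>\<^sup>+t. Kk j y t \<partial>PM j) \<le> 1"
  shows "(\<integral>\<^sup>+t. Kk (Suc j) x t \<partial>PM (Suc j)) \<le> 1"
proof -
  define V where "V t' = (\<lambda>i. w * x i - real_of_int \<lfloor>w * t' i\<rfloor>)" for t' :: "nat \<Rightarrow> real"
  define c where "c = ennreal (w ^ (n - j))"
  define H where "H \<sigma> = (\<integral>\<^sup>+t'. c * Lf j ((V t')(j := \<sigma>)) \<partial>PM (Suc j))" for \<sigma>
  interpret PS: sigma_finite_measure "PM (Suc j)" by (rule sf_PM) simp
  interpret pair: pair_sigma_finite lborel "PM (Suc j)" by standard
  have joint: "(\<lambda>z. Lf j ((V (snd z))(j := fst z))) \<in> borel_measurable (lborel \<Otimes>\<^sub>M PM (Suc j))"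
  proof (rule Lf_meas_comp, use jn in simp, rule measurable_restrict)
    fix i assume i: "i \<in> {j..<n}"
    show "(\<lambda>z. ((V (snd z))(j := fst z)) i) \<in> lborel \<Otimes>\<^sub>M PM (Suc j) \<rightarrow>\<^sub>M lborel"
    proof (cases "i = j")
      case True then show ?thesis by (simp add: measurable_lborel2)
    next
      case False
      then have "i \<in> {Suc j..<n}" using i by auto
      then show ?thesis using False by (simp add: V_def measurable_lborel2)
    qed
  qed
  have joint2: "(\<lambda>(\<sigma>, t'). c * Lf j ((V t')(j := \<sigma>))) \<in> borel_measurable (lborel \<Otimes>\<^sub>M PM (Suc j))"
    using joint by (simp add: case_prod_beta)
  have Hm: "H \<in> borel_measurable borel"
  proof -
    have "H \<in> borel_measurable lborel" unfolding H_def
      by (rule PS.borel_measurable_nn_integral[OF joint2])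
    then show ?thesis by (simp add: measurable_lborel1)
  qed
  have sec1: "(\<lambda>\<sigma>. c * Lf j ((V t')(j := \<sigma>))) \<in> borel_measurable lborel" if "t' \<in> space (PM (Suc j))" for t'
    using measurable_comp[OF measurable_Pair2'[OF that] joint2] by (simp add: comp_def)
  have sec0: "(\<lambda>\<sigma>. Lf j ((V t')(j := \<sigma>))) \<in> borel_measurable lborel" if "t' \<in> space (PM (Suc j))" for t'
    using measurable_comp[OF measurable_Pair2'[OF that] joint] by (simp add: comp_def)
  have i: "(\<integral>\<^sup>+t. Kk (Suc j) x t \<partial>PM (Suc j)) = ennreal (1/w) * (\<integral>\<^sup>+\<sigma>. H \<sigma> \<partial>lborel)"
  proof -
    have cw: "ennreal (w ^ (n - Suc j)) = ennreal (1/w) * c"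
    proof -
      have "w ^ (n - j) = w * w ^ (n - Suc j)" using jn by (metis Suc_diff_Suc power_Suc)
      then have "(1/w) * w ^ (n - j) = w ^ (n - Suc j)" using w by simp
      then show ?thesis using w by (simp add: c_def ennreal_mult[symmetric] del: ennreal_mult')
    qed
    have "(\<integral>\<^sup>+t. Kk (Suc j) x t \<partial>PM (Suc j)) = (\<integral>\<^sup>+t'. (\<integral>\<^sup>+\<sigma>. ennreal (1/w) * (c * Lf j ((V t')(j := \<sigma>))) \<partial>lborel) \<partial>PM (Suc j))"
    proof (rule nn_integral_cong)
      fix t' assume t': "t' \<in> space (PM (Suc j))"
      have "Kk (Suc j) x t' = ennreal (1/w) * (c * Lf (Suc j) (V t'))"
        unfolding Kk_def cw by (simp add: V_def mult.assoc)
      also have "c * Lf (Suc j) (V t') = (\<integral>\<^sup>+\<sigma>. c * Lf j ((V t')(j := \<sigma>)) \<partial>lborel)"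
        using sec0[OF t'] by (simp add: nn_integral_cmult)
      also have "ennreal (1/w) * \<dots> = (\<integral>\<^sup>+\<sigma>. ennreal (1/w) * (c * Lf j ((V t')(j := \<sigma>))) \<partial>lborel)"
        using sec1[OF t'] by (simp add: nn_integral_cmult)
      finally show "Kk (Suc j) x t' = \<dots>" .
    qed
    also have "\<dots> = (\<integral>\<^sup>+\<sigma>. (\<integral>\<^sup>+t'. ennreal (1/w) * (c * Lf j ((V t')(j := \<sigma>))) \<partial>PM (Suc j)) \<partial>lborel)"
      by (rule pair.Fubini') (use joint2 in \<open>simp add: case_prod_beta\<close>)
    also have "\<dots> = (\<integral>\<^sup>+\<sigma>. ennreal (1/w) * H \<sigma> \<partial>lborel)"
    proof (rule nn_integral_cong)
      fix \<sigma> :: real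
      have "(\<lambda>t'. c * Lf j ((V t')(j := \<sigma>))) \<in> borel_measurable (PM (Suc j))"
        using measurable_comp[OF measurable_Pair1'[of \<sigma> lborel] joint2] by (simp add: comp_def)
      then show "(\<integral>\<^sup>+t'. ennreal (1/w) * (c * Lf j ((V t')(j := \<sigma>))) \<partial>PM (Suc j)) = ennreal (1/w) * H \<sigma>"
        unfolding H_def by (rule nn_integral_cmult)
    qed
    also have "\<dots> = ennreal (1/w) * (\<integral>\<^sup>+\<sigma>. H \<sigma> \<partial>lborel)"
      using Hm by (simp add: nn_integral_cmult measurable_lborel1)
    finally show ?thesis .
  qed
  have ii: "ennreal (1/w) * (\<integral>\<^sup>+k. H (\<sigma> - real_of_int k) \<partial>count_space UNIV) \<le> 1" for \<sigma>
  proof -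
    define y where "y = x(j := \<sigma> / w)"
    have ins: "{j..<n} = insert j {Suc j..<n}" using jn by auto
    have Km: "Kk j y \<in> borel_measurable (PiM (insert j {Suc j..<n}) (\<lambda>_. lborel))"
      using Kk_meas_t[of j j y] jn ins by simp
    have "(\<integral>\<^sup>+t. Kk j y t \<partial>PM j) = (\<integral>\<^sup>+\<tau>. (\<integral>\<^sup>+t'. Kk j y (t'(j := \<tau>)) \<partial>PM (Suc j)) \<partial>lborel)"
      unfolding ins by (rule product_sigma_finite.product_nn_integral_insert_rev[OF psf_lborel _ _ Km]) auto
    also have "\<dots> = (\<integral>\<^sup>+\<tau>. H (\<sigma> - real_of_int \<lfloor>w * \<tau>\<rfloor>) \<partial>lborel)"
    proof (rule nn_integral_cong)
      fix \<tau> :: real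
      have "(\<lambda>i. w * y i - real_of_int \<lfloor>w * (t'(j := \<tau>)) i\<rfloor>) = (V t')(j := \<sigma> - real_of_int \<lfloor>w * \<tau>\<rfloor>)" for t'
        using w by (auto simp: y_def V_def fun_eq_iff)
      then show "(\<integral>\<^sup>+t'. Kk j y (t'(j := \<tau>)) \<partial>PM (Suc j)) = H (\<sigma> - real_of_int \<lfloor>w * \<tau>\<rfloor>)"
        by (simp add: Kk_def H_def c_def)
    qed
    also have "\<dots> = ennreal (1/w) * (\<integral>\<^sup>+k. H (\<sigma> - real_of_int k) \<partial>count_space UNIV)"
      by (rule A1[OF w])
    finally show ?thesis using IH[of y] by simp
  qed
  have iii: "(\<integral>\<^sup>+\<sigma>. H \<sigma> \<partial>lborel) \<le> ennreal w"
  proof -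
    have S: "(\<integral>\<^sup>+k. H (\<sigma> - real_of_int k) \<partial>count_space UNIV) \<le> ennreal w" for \<sigma>
    proof -
      have "(\<integral>\<^sup>+k. H (\<sigma> - real_of_int k) \<partial>count_space UNIV)
          = ennreal w * (ennreal (1/w) * (\<integral>\<^sup>+k. H (\<sigma> - real_of_int k) \<partial>count_space UNIV))"
        by (simp add: mult.assoc[symmetric] inv_w)
      also have "\<dots> \<le> ennreal w * 1" by (intro mult_left_mono ii) simp
      finally show ?thesis by simp
    qed
    have "(\<integral>\<^sup>+\<sigma>. H \<sigma> \<partial>lborel) = (\<integral>\<^sup>+\<sigma>. (\<integral>\<^sup>+k. H (\<sigma> - real_of_int k) \<partial>count_space UNIV) * indicator {0..<1} \<sigma> \<partial>lborel)"
      by (rule B1[OF Hm])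
    also have "\<dots> \<le> (\<integral>\<^sup>+\<sigma>. ennreal w * indicator {0..<1::real} \<sigma> \<partial>lborel)"
      by (rule nn_integral_mono, rule mult_right_mono[OF S]) simp
    also have "\<dots> = ennreal w" by (simp add: nn_integral_cmult_indicator)
    finally show ?thesis .
  qed
  have "(\<integral>\<^sup>+t. Kk (Suc j) x t \<partial>PM (Suc j)) \<le> ennreal (1/w) * ennreal w"
    unfolding i by (intro mult_left_mono iii) simp
  then show ?thesis by (simp add: inv_w)
qed

end

lemma abs_infsum_le:
  fixes a :: "'k \<Rightarrow> real"
  shows "ennreal \<bar>infsum a A\<bar> \<le> (\<integral>\<^sup>+k. ennreal \<bar>a k\<bar> \<partial>count_space A)"
proof (cases "a summable_on A")
  case False
  then show ?thesis by (simp add: infsum_not_exists)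
next
  case True
  then have as: "(\<lambda>k. norm (a k)) summable_on A" using summable_on_iff_abs_summable_on_real by blast
  have "\<bar>infsum a A\<bar> \<le> infsum (\<lambda>k. norm (a k)) A" using norm_infsum_bound[OF as] by simp
  also have "infsum (\<lambda>k. norm (a k)) A = infsetsum (\<lambda>k. \<bar>a k\<bar>) A"
  proof -
    have "Infinite_Set_Sum.abs_summable_on (\<lambda>k. \<bar>a k\<bar>) A"
      using as abs_summable_equivalent[of "\<lambda>k. \<bar>a k\<bar>" A] by simp
    then show ?thesis using infsetsum_infsum[of "\<lambda>k. \<bar>a k\<bar>" A] by simp
  qed
  finally have le: "\<bar>infsum a A\<bar> \<le> infsetsum (\<lambda>k. \<bar>a k\<bar>) A" .
  have "Infinite_Set_Sum.abs_summable_on (\<lambda>k. \<bar>a k\<bar>) A"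
    using as abs_summable_equivalent[of "\<lambda>k. \<bar>a k\<bar>" A] by simp
  then have "(\<integral>\<^sup>+k. ennreal \<bar>a k\<bar> \<partial>count_space A) = ennreal (infsetsum (\<lambda>k. \<bar>a k\<bar>) A)"
    by (rule nn_integral_conv_infsetsum) simp
  then show ?thesis using le by (simp add: ennreal_leI)
qed

lemma LINT_bound:
  fixes f :: "'a \<Rightarrow> real"
  shows "ennreal \<bar>LINT t:B|M. f t\<bar> \<le> (\<integral>\<^sup>+t. ennreal \<bar>f t\<bar> * indicator B t \<partial>M)"
proof (cases "integrable M (\<lambda>t. indicator B t *\<^sub>R f t)")
  case True
  have "ennreal \<bar>LINT t:B|M. f t\<bar> = ennreal (norm (integral\<^sup>L M (\<lambda>t. indicator B t *\<^sub>R f t)))"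
    by (simp add: set_lebesgue_integral_def)
  also have "\<dots> \<le> (\<integral>\<^sup>+t. ennreal (norm (indicator B t *\<^sub>R f t)) \<partial>M)"
    by (rule integral_norm_bound_ennreal[OF True])
  also have "\<dots> = (\<integral>\<^sup>+t. ennreal \<bar>f t\<bar> * indicator B t \<partial>M)"
    by (intro nn_integral_cong) (simp add: indicator_def)
  finally show ?thesis .
next
  case False
  then show ?thesis by (simp add: set_lebesgue_integral_def not_integrable_integral_eq)
qed

lemma countable_Zn: "countable (Zn n)"
  unfolding Zn_def by (rule countable_PiE) auto

lemma lebn_psf: "product_sigma_finite (\<lambda>_::nat. lborel :: real measure)" by (rule psf_lborel)

lemma null_hyperplane:
  assumes i: "i < n"
  shows "AE t in lebn n. t i \<noteq> c"
proof (rule AE_I')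
  define N where "N = PiE {..<n} (\<lambda>l. if l = i then {c} else (UNIV :: real set))"
  have Ns: "N \<in> sets (lebn n)" unfolding N_def lebn_def
    by (rule sets_PiM_I_finite) auto
  have "emeasure (lebn n) N = (\<Prod>l\<in>{..<n}. emeasure lborel (if l = i then {c} else (UNIV :: real set)))"
    unfolding N_def lebn_def
    by (rule product_sigma_finite.emeasure_PiM[OF psf_lborel]) auto
  also have "\<dots> = 0" using i by (intro prod_zero) auto
  finally show "N \<in> null_sets (lebn n)" using Ns by auto
  show "{x \<in> space (lebn n). \<not> x i \<noteq> c} \<subseteq> N"
    by (auto simp: N_def lebn_def space_PiM PiE_iff extensional_def)
qed

context KS begin

definition kap :: "(nat \<Rightarrow> real) \<Rightarrow> (nat \<Rightarrow> int)" where
  "kap t = restrict (\<lambda>i. \<lfloor>w * t i\<rfloor>) {..<n}"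

definition boxo :: "(nat \<Rightarrow> int) \<Rightarrow> (nat \<Rightarrow> real) set" where
  "boxo k = PiE {..<n} (\<lambda>i. {real_of_int (k i) / w ..< (real_of_int (k i) + 1) / w})"

lemma kap_Zn: "kap t \<in> Zn n" by (simp add: kap_def Zn_def)

lemma boxo_sets[measurable]: "boxo k \<in> sets (lebn n)"
  unfolding boxo_def lebn_def by (rule sets_PiM_I_finite) auto

lemma in_boxo: "t \<in> space (lebn n) \<Longrightarrow> k \<in> Zn n \<Longrightarrow> t \<in> boxo k \<longleftrightarrow> kap t = k"
proof -
  assume t: "t \<in> space (lebn n)" and k: "k \<in> Zn n"
  have iff: "(real_of_int (k i) / w \<le> t i \<and> t i < (real_of_int (k i) + 1) / w) \<longleftrightarrow> \<lfloor>w * t i\<rfloor> = k i" for i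
  proof -
    have "(real_of_int (k i) / w \<le> t i \<and> t i < (real_of_int (k i) + 1) / w) \<longleftrightarrow>
          (real_of_int (k i) \<le> w * t i \<and> w * t i < real_of_int (k i) + 1)"
      using w by (simp add: field_simps)
    also have "\<dots> \<longleftrightarrow> \<lfloor>w * t i\<rfloor> = k i" by linarith
    finally show ?thesis .
  qed
  have text0: "t \<in> extensional {..<n}" using t by (simp add: lebn_def space_PiM PiE_def)
  have kext: "k \<in> extensional {..<n}" using k by (simp add: Zn_def PiE_def)
  show ?thesis
  proof
    assume "t \<in> boxo k"
    then have "\<forall>i<n. \<lfloor>w * t i\<rfloor> = k i" using iff by (auto simp: boxo_def PiE_iff)
    then show "kap t = k" using kext by (auto simp: kap_def fun_eq_iff extensional_def)
  next
    assume "kap t = k"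
    then have "\<forall>i<n. \<lfloor>w * t i\<rfloor> = k i" by (auto simp: kap_def)
    then show "t \<in> boxo k" using iff text0 by (auto simp: boxo_def PiE_iff)
  qed
qed

lemma Dn:
  assumes hm[measurable]: "h \<in> borel_measurable (lebn n)"
  shows "(\<integral>\<^sup>+t. h t * g (kap t) \<partial>lebn n) = (\<integral>\<^sup>+k. g k * (\<integral>\<^sup>+t. h t * indicator (boxo k) t \<partial>lebn n) \<partial>count_space (Zn n))"
proof -
  have pt: "g (kap t) = (\<integral>\<^sup>+k. g k * indicator (boxo k) t \<partial>count_space (Zn n))" if t: "t \<in> space (lebn n)" for t
  proof -
    have "(\<integral>\<^sup>+k. g k * indicator (boxo k) t \<partial>count_space (Zn n)) = (\<integral>\<^sup>+k. g k * indicator {kap t} k \<partial>count_space (Zn n))"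
      by (intro nn_integral_cong) (simp add: indicator_def in_boxo[OF t])
    also have "\<dots> = g (kap t) * emeasure (count_space (Zn n)) {kap t}"
      by (rule nn_integral_indicator_singleton) (simp add: kap_Zn)
    also have "\<dots> = g (kap t)" using kap_Zn[of t] by simp
    finally show ?thesis by simp
  qed
  have "(\<integral>\<^sup>+t. h t * g (kap t) \<partial>lebn n) = (\<integral>\<^sup>+t. (\<integral>\<^sup>+k. h t * (g k * indicator (boxo k) t) \<partial>count_space (Zn n)) \<partial>lebn n)"
    by (intro nn_integral_cong) (simp add: pt nn_integral_cmult)
  also have "\<dots> = (\<integral>\<^sup>+k. (\<integral>\<^sup>+t. h t * (g k * indicator (boxo k) t) \<partial>lebn n) \<partial>count_space (Zn n))"
    by (rule nn_integral_count_space_nn_integral[OF countable_Zn]) measurable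
  also have "\<dots> = (\<integral>\<^sup>+k. g k * (\<integral>\<^sup>+t. h t * indicator (boxo k) t \<partial>lebn n) \<partial>count_space (Zn n))"
  proof (intro nn_integral_cong)
    fix k
    have "(\<integral>\<^sup>+t. h t * (g k * indicator (boxo k) t) \<partial>lebn n) = (\<integral>\<^sup>+t. g k * (h t * indicator (boxo k) t) \<partial>lebn n)"
      by (simp add: ac_simps)
    also have "\<dots> = g k * (\<integral>\<^sup>+t. h t * indicator (boxo k) t \<partial>lebn n)"
      by (rule nn_integral_cmult) measurable
    finally show "(\<integral>\<^sup>+t. h t * (g k * indicator (boxo k) t) \<partial>lebn n) = g k * (\<integral>\<^sup>+t. h t * indicator (boxo k) t \<partial>lebn n)" .
  qed
  finally show ?thesis .
qed

lemma emeasure_boxo: "emeasure (lebn n) (boxo k) = ennreal ((1/w) ^ n)"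
proof -
  have "emeasure (lebn n) (boxo k) = (\<Prod>i\<in>{..<n}. emeasure lborel {real_of_int (k i) / w ..< (real_of_int (k i) + 1) / w})"
    unfolding boxo_def lebn_def
    by (rule product_sigma_finite.emeasure_PiM[OF psf_lborel]) auto
  also have "\<dots> = (\<Prod>i\<in>{..<n}. ennreal (1/w))"
  proof (intro prod.cong refl)
    fix i
    have "(real_of_int (k i) + 1) / w - real_of_int (k i) / w = 1 / w" using w by (simp add: field_simps)
    moreover have "real_of_int (k i) / w \<le> (real_of_int (k i) + 1) / w" using w by (simp add: divide_right_mono)
    ultimately show "emeasure lborel {real_of_int (k i) / w ..< (real_of_int (k i) + 1) / w} = ennreal (1/w)"
      by simp
  qed
  also have "\<dots> = ennreal ((1/w) ^ n)" using w by (simp add: ennreal_power)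
  finally show ?thesis .
qed

lemma int_boxo_1: "(\<integral>\<^sup>+t. g (kap t) \<partial>lebn n) = ennreal ((1/w) ^ n) * (\<integral>\<^sup>+k. g k \<partial>count_space (Zn n))"
proof -
  have "(\<integral>\<^sup>+t. g (kap t) \<partial>lebn n) = (\<integral>\<^sup>+t. 1 * g (kap t) \<partial>lebn n)" by simp
  also have "\<dots> = (\<integral>\<^sup>+k. g k * (\<integral>\<^sup>+t. 1 * indicator (boxo k) t \<partial>lebn n) \<partial>count_space (Zn n))"
    by (rule Dn) simp
  also have "\<dots> = (\<integral>\<^sup>+k. g k * ennreal ((1/w) ^ n) \<partial>count_space (Zn n))"
    by (simp add: emeasure_boxo)
  also have "\<dots> = ennreal ((1/w) ^ n) * (\<integral>\<^sup>+k. g k \<partial>count_space (Zn n))"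
    by (simp add: nn_integral_multc mult.commute)
  finally show ?thesis .
qed

lemma restrict_kap: "restrict (\<lambda>i. w * x i - real_of_int \<lfloor>w * t i\<rfloor>) {..<n} = vsub n (\<lambda>i. w * x i) (kap t)"
  by (auto simp: vsub_def kap_def fun_eq_iff)

lemma mass0:
  assumes S: "\<And>u. (\<integral>\<^sup>+k. ennreal \<bar>chi (vsub n u k)\<bar> \<partial>count_space (Zn n)) \<le> ennreal M"
  shows "(\<integral>\<^sup>+t. Kk 0 x t \<partial>PM 0) \<le> 1"
proof -
  define g where "g k = ennreal (w ^ n) * ennreal (\<bar>chi (vsub n (\<lambda>i. w * x i) k)\<bar> / M)" for k
  have "(\<integral>\<^sup>+t. Kk 0 x t \<partial>PM 0) = (\<integral>\<^sup>+t. g (kap t) \<partial>lebn n)"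
    by (simp add: Kk_def g_def lebn_def atLeast0LessThan restrict_kap)
  also have "\<dots> = ennreal ((1/w) ^ n) * (\<integral>\<^sup>+k. g k \<partial>count_space (Zn n))" by (rule int_boxo_1)
  also have "\<dots> = (\<integral>\<^sup>+k. ennreal (1/M) * ennreal \<bar>chi (vsub n (\<lambda>i. w * x i) k)\<bar> \<partial>count_space (Zn n))"
  proof -
    have "ennreal ((1/w) ^ n) * g k = ennreal (1/M) * ennreal \<bar>chi (vsub n (\<lambda>i. w * x i) k)\<bar>" for k
    proof -
      have "(1/w) ^ n * (w ^ n * (\<bar>chi (vsub n (\<lambda>i. w * x i) k)\<bar> / M)) = 1/M * \<bar>chi (vsub n (\<lambda>i. w * x i) k)\<bar>"
        using w by (simp add: power_one_over field_simps)
      then show ?thesis using w Mpos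
        by (simp add: g_def ennreal_mult[symmetric] mult.assoc del: ennreal_mult')
    qed
    then show ?thesis by (simp add: nn_integral_cmult[symmetric])
  qed
  also have "\<dots> = ennreal (1/M) * (\<integral>\<^sup>+k. ennreal \<bar>chi (vsub n (\<lambda>i. w * x i) k)\<bar> \<partial>count_space (Zn n))"
    by (simp add: nn_integral_cmult)
  also have "\<dots> \<le> ennreal (1/M) * ennreal M" by (intro mult_left_mono S) simp
  also have "\<dots> = 1" using Mpos by (simp add: ennreal_mult[symmetric] del: ennreal_mult')
  finally show ?thesis .
qed

end

context KS begin

lemma AE_box:
  "AE t in lebn n. (indicator (box n w k) t :: ennreal) = indicator (boxo k) t"
proof -
  have "AE t in lebn n. \<forall>i\<in>{..<n}. t i \<noteq> (real_of_int (k i) + 1) / w"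
    by (rule AE_finite_allI) (auto intro: null_hyperplane)
  then show ?thesis
  proof (rule AE_mp, intro AE_I2 impI)
    fix t assume t: "t \<in> space (lebn n)" and ne: "\<forall>i\<in>{..<n}. t i \<noteq> (real_of_int (k i) + 1) / w"
    have "t \<in> box n w k \<longleftrightarrow> t \<in> boxo k"
      using ne unfolding box_def boxo_def PiE_iff by (auto simp: less_le)
    then show "(indicator (box n w k) t :: ennreal) = indicator (boxo k) t" by (simp add: indicator_def)
  qed
qed

lemma base0:
  assumes lam: "lam > 0" and fm[measurable]: "f \<in> borel_measurable (lebn n)"
  shows "ennreal \<bar>lam * kant n chi w f x\<bar> \<le> (\<integral>\<^sup>+t. modG 0 \<Phi> (\<lambda>t. lam * M * f t) t * Kk 0 x t \<partial>PM 0)"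
proof -
  define a where "a = (\<lambda>k. chi (vsub n (\<lambda>i. w * x i) k) * w ^ n * (LINT t:box n w k|lebn n. f t))"
  define c where "c k = ennreal \<bar>chi (vsub n (\<lambda>i. w * x i) k)\<bar>" for k
  have vm: "(\<lambda>t. vsub n (\<lambda>i. w * x i) (kap t)) \<in> measurable (lebn n) (lebn n)"
  proof -
    have "(\<lambda>t. restrict (\<lambda>i. w * x i - real_of_int \<lfloor>w * t i\<rfloor>) {..<n}) \<in> measurable (lebn n) (lebn n)"
      unfolding lebn_def by (rule measurable_restrict) (simp add: measurable_lborel2)
    then show ?thesis by (simp add: restrict_kap)
  qed
  have hm: "(\<lambda>t. ennreal \<bar>f t\<bar> * c (kap t)) \<in> borel_measurable (lebn n)"
    unfolding c_def using measurable_comp[OF vm chi_meas] by (simp add: comp_def)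
  have "ennreal \<bar>lam * kant n chi w f x\<bar> = ennreal lam * ennreal \<bar>infsum a (Zn n)\<bar>"
    using lam by (simp add: kant_def a_def abs_mult ennreal_mult)
  also have "\<dots> \<le> ennreal lam * (\<integral>\<^sup>+k. ennreal \<bar>a k\<bar> \<partial>count_space (Zn n))"
    by (intro mult_left_mono abs_infsum_le) simp
  also have "\<dots> \<le> ennreal lam * (\<integral>\<^sup>+k. ennreal (w ^ n) * (c k * (\<integral>\<^sup>+t. ennreal \<bar>f t\<bar> * indicator (boxo k) t \<partial>lebn n)) \<partial>count_space (Zn n))"
  proof (intro mult_left_mono nn_integral_mono)
    fix k
    have "ennreal \<bar>a k\<bar> = ennreal (w ^ n) * (c k * ennreal \<bar>LINT t:box n w k|lebn n. f t\<bar>)"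
      using w by (simp add: a_def c_def abs_mult ennreal_mult[symmetric] ac_simps del: ennreal_mult')
    also have "\<dots> \<le> ennreal (w ^ n) * (c k * (\<integral>\<^sup>+t. ennreal \<bar>f t\<bar> * indicator (box n w k) t \<partial>lebn n))"
      by (intro mult_left_mono LINT_bound) auto
    also have "(\<integral>\<^sup>+t. ennreal \<bar>f t\<bar> * indicator (box n w k) t \<partial>lebn n) = (\<integral>\<^sup>+t. ennreal \<bar>f t\<bar> * indicator (boxo k) t \<partial>lebn n)"
      by (rule nn_integral_cong_AE) (use AE_box[of k] in \<open>auto elim: AE_mp\<close>)
    finally show "ennreal \<bar>a k\<bar> \<le> ennreal (w ^ n) * (c k * (\<integral>\<^sup>+t. ennreal \<bar>f t\<bar> * indicator (boxo k) t \<partial>lebn n))" .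
  qed simp
  also have "(\<integral>\<^sup>+k. ennreal (w ^ n) * (c k * (\<integral>\<^sup>+t. ennreal \<bar>f t\<bar> * indicator (boxo k) t \<partial>lebn n)) \<partial>count_space (Zn n))
      = ennreal (w ^ n) * (\<integral>\<^sup>+t. ennreal \<bar>f t\<bar> * c (kap t) \<partial>lebn n)"
    by (simp add: nn_integral_cmult Dn[of "\<lambda>t. ennreal \<bar>f t\<bar>"])
  also have "ennreal lam * (ennreal (w ^ n) * (\<integral>\<^sup>+t. ennreal \<bar>f t\<bar> * c (kap t) \<partial>lebn n))
      = (\<integral>\<^sup>+t. ennreal lam * ennreal (w ^ n) * (ennreal \<bar>f t\<bar> * c (kap t)) \<partial>lebn n)"
    using hm by (simp add: nn_integral_cmult mult.assoc)
  also have "\<dots> = (\<integral>\<^sup>+t. modG 0 \<Phi> (\<lambda>t. lam * M * f t) t * Kk 0 x t \<partial>PM 0)"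
  proof -
    have "ennreal lam * ennreal (w ^ n) * (ennreal \<bar>f t\<bar> * c (kap t)) = modG 0 \<Phi> (\<lambda>t. lam * M * f t) t * Kk 0 x t" for t
    proof -
      have "lam * w ^ n * (\<bar>f t\<bar> * \<bar>chi (vsub n (\<lambda>i. w * x i) (kap t))\<bar>)
          = \<bar>lam * M * f t\<bar> * (w ^ n * (\<bar>chi (vsub n (\<lambda>i. w * x i) (kap t))\<bar> / M))"
        using lam Mpos by (simp add: abs_mult field_simps)
      then show ?thesis using lam Mpos w
        by (simp add: c_def Kk_def restrict_kap ennreal_mult[symmetric] del: ennreal_mult')
    qed
    then show ?thesis by (simp add: lebn_def atLeast0LessThan)
  qed
  finally show ?thesis .
qed

lemma Lf_merge:
  "j \<le> n \<Longrightarrow> Lf j v = (\<integral>\<^sup>+s. Lf 0 (\<lambda>i. if i < j then s i else v i) \<partial>PiM {..<j} (\<lambda>_. lborel))"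
proof (induction j arbitrary: v)
  case 0
  then show ?case by (simp add: PiM_empty)
next
  case (Suc j)
  then have jn: "j < n" by simp
  have mg: "(\<lambda>s. Lf 0 (\<lambda>i. if i < Suc j then s i else v i)) \<in> borel_measurable (PiM (insert j {..<j}) (\<lambda>_. lborel))"
  proof (rule Lf_meas_comp, simp, rule measurable_restrict)
    fix i assume i: "i \<in> {0..<n}"
    show "(\<lambda>s. if i < Suc j then s i else v i) \<in> PiM (insert j {..<j}) (\<lambda>_. lborel) \<rightarrow>\<^sub>M lborel"
    proof (cases "i < Suc j")
      case True
      then have "i \<in> insert j {..<j}" by auto
      then show ?thesis using True by simp
    next
      case False then show ?thesis by simp
    qed
  qed
  have "(\<integral>\<^sup>+s. Lf 0 (\<lambda>i. if i < Suc j then s i else v i) \<partial>PiM {..<Suc j} (\<lambda>_. lborel))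
      = (\<integral>\<^sup>+u. (\<integral>\<^sup>+s. Lf 0 (\<lambda>i. if i < Suc j then (s(j:=u)) i else v i) \<partial>PiM {..<j} (\<lambda>_. lborel)) \<partial>lborel)"
    unfolding lessThan_Suc
    by (rule product_sigma_finite.product_nn_integral_insert_rev[OF psf_lborel _ _ mg]) auto
  also have "\<dots> = (\<integral>\<^sup>+u. Lf j (v(j:=u)) \<partial>lborel)"
  proof (rule nn_integral_cong)
    fix u
    have "(\<lambda>i. if i < Suc j then (s(j:=u)) i else v i) = (\<lambda>i. if i < j then s i else (v(j:=u)) i)" for s :: "nat \<Rightarrow> real"
      by (auto simp: fun_eq_iff)
    note e = this
    show "(\<integral>\<^sup>+s. Lf 0 (\<lambda>i. if i < Suc j then (s(j:=u)) i else v i) \<partial>PiM {..<j} (\<lambda>_. lborel)) = Lf j (v(j:=u))"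
      unfolding e by (rule Suc.IH[symmetric]) (use jn in simp)
  qed
  finally show ?case by simp
qed

lemma Lf_full:
  assumes int: "integrable (lebn n) chi"
  shows "Lf n v = ennreal ((LINT u|lebn n. \<bar>chi u\<bar>) / M)"
proof -
  have "Lf n v = (\<integral>\<^sup>+s. Lf 0 (\<lambda>i. if i < n then s i else v i) \<partial>lebn n)"
    using Lf_merge[of n v] by (simp add: lebn_def)
  also have "\<dots> = (\<integral>\<^sup>+s. ennreal (1/M) * ennreal \<bar>chi s\<bar> \<partial>lebn n)"
  proof (rule nn_integral_cong)
    fix s assume s: "s \<in> space (lebn n)"
    then have "restrict (\<lambda>i. if i < n then s i else v i) {..<n} = s"
      by (auto simp: lebn_def space_PiM PiE_def extensional_def fun_eq_iff)
    then show "Lf 0 (\<lambda>i. if i < n then s i else v i) = ennreal (1/M) * ennreal \<bar>chi s\<bar>"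
      using Mpos by (simp add: ennreal_mult[symmetric] del: ennreal_mult')
  qed
  also have "\<dots> = ennreal (1/M) * (\<integral>\<^sup>+s. ennreal \<bar>chi s\<bar> \<partial>lebn n)"
    by (rule nn_integral_cmult) simp
  also have "(\<integral>\<^sup>+s. ennreal \<bar>chi s\<bar> \<partial>lebn n) = ennreal (LINT u|lebn n. \<bar>chi u\<bar>)"
    by (rule nn_integral_eq_integral) (use int in auto)
  also have "ennreal (1/M) * ennreal (LINT u|lebn n. \<bar>chi u\<bar>) = ennreal ((LINT u|lebn n. \<bar>chi u\<bar>) / M)"
    using Mpos by (simp add: ennreal_mult[symmetric] del: ennreal_mult')
  finally show ?thesis .
qed

end

lemma pw_0: "0 \<le> x \<Longrightarrow> pw x 0 = 1"
  by (simp add: pw_def)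

lemma vnorm_nonneg: "0 \<le> vnorm n u"
  by (simp add: vnorm_def sum_nonneg)

lemma vsub_restrict: "vsub n u k = vsub n (restrict u {..<n}) k"
  by (simp add: vsub_def fun_eq_iff)

lemma sum_le_moment:
  assumes mom: "moment n chi 0 < \<infinity>"
  shows "(\<integral>\<^sup>+k. ennreal \<bar>chi (vsub n u k)\<bar> \<partial>count_space (Zn n)) \<le> ennreal (enn2real (moment n chi 0))"
proof -
  define u' where "u' = restrict u {..<n}"
  have u': "u' \<in> Rn n" by (simp add: u'_def Rn_def)
  have "(\<integral>\<^sup>+k. ennreal \<bar>chi (vsub n u k)\<bar> \<partial>count_space (Zn n))
      = (\<integral>\<^sup>+k. ennreal (\<bar>chi (vsub n u' k)\<bar> * pw (vnorm n (vsub n u' k)) 0) \<partial>count_space (Zn n))"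
  proof (rule nn_integral_cong)
    fix k
    have "vsub n u k = vsub n u' k" by (simp add: vsub_def u'_def fun_eq_iff)
    then show "ennreal \<bar>chi (vsub n u k)\<bar> = ennreal (\<bar>chi (vsub n u' k)\<bar> * pw (vnorm n (vsub n u' k)) 0)"
      by (simp add: pw_0 vnorm_nonneg)
  qed
  also have "\<dots> \<le> moment n chi 0"
    unfolding moment_def by (rule SUP_upper[OF u'])
  also have "\<dots> = ennreal (enn2real (moment n chi 0))" using mom by (simp add: less_top)
  finally show ?thesis .
qed

lemma moment_ge1:
  assumes mom: "moment n chi 0 < \<infinity>" and part: "\<forall>u\<in>Rn n. ((\<lambda>k. chi (vsub n u k)) has_sum 1) (Zn n)"
  shows "1 \<le> enn2real (moment n chi 0)"
proof -
  define u0 :: "nat \<Rightarrow> real" where "u0 = restrict (\<lambda>_. 0) {..<n}"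
  have u0: "u0 \<in> Rn n" by (simp add: u0_def Rn_def)
  have "infsum (\<lambda>k. chi (vsub n u0 k)) (Zn n) = 1" using part u0 by (simp add: infsumI)
  then have "ennreal 1 \<le> (\<integral>\<^sup>+k. ennreal \<bar>chi (vsub n u0 k)\<bar> \<partial>count_space (Zn n))"
    using abs_infsum_le[of "\<lambda>k. chi (vsub n u0 k)" "Zn n"] by simp
  also have "\<dots> \<le> ennreal (enn2real (moment n chi 0))" by (rule sum_le_moment[OF mom])
  finally have "ennreal 1 \<le> ennreal (enn2real (moment n chi 0))" .
  then show ?thesis using ennreal_le_iff[of "enn2real (moment n chi 0)" 1] by simp
qed

lemma sum_le_M:
  assumes mom: "moment n chi 0 < \<infinity>" and part: "\<forall>u\<in>Rn n. ((\<lambda>k. chi (vsub n u k)) has_sum 1) (Zn n)"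
  shows "(\<integral>\<^sup>+k. ennreal \<bar>chi (vsub n u k)\<bar> \<partial>count_space (Zn n)) \<le> ennreal ((enn2real (moment n chi 0)) ^ n)"
proof (cases "n = 0")
  case True
  define k0 :: "nat \<Rightarrow> int" where "k0 = (\<lambda>_. undefined)"
  have Z: "Zn n = {k0}" using True by (simp add: Zn_def k0_def)
  define u0 :: "nat \<Rightarrow> real" where "u0 = (\<lambda>_. undefined)"
  have u0: "u0 \<in> Rn n" using True by (simp add: u0_def Rn_def)
  have vs: "vsub n u k0 = vsub n u0 k0" using True by (simp add: vsub_def restrict_def)
  have "((\<lambda>k. chi (vsub n u0 k)) has_sum 1) {k0}" using part u0 Z by simp
  moreover have "((\<lambda>k. chi (vsub n u0 k)) has_sum chi (vsub n u0 k0)) {k0}"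
    using has_sum_finite[of "{k0}" "\<lambda>k. chi (vsub n u0 k)"] by simp
  ultimately have c1: "chi (vsub n u0 k0) = 1" using has_sum_unique by metis
  show ?thesis using True Z vs c1 by (simp add: nn_integral_count_space_finite)
next
  case False
  have m1: "1 \<le> enn2real (moment n chi 0)" by (rule moment_ge1[OF mom part])
  have "enn2real (moment n chi 0) ^ 1 \<le> enn2real (moment n chi 0) ^ n"
    by (rule power_increasing) (use False m1 in auto)
  then have "ennreal (enn2real (moment n chi 0)) \<le> ennreal ((enn2real (moment n chi 0)) ^ n)"
    by (intro ennreal_leI) simp
  with sum_le_moment[OF mom] show ?thesis by (rule order_trans)
qed

theorem theorem5p1:
  fixes n :: nat and \<Phi> :: "nat \<Rightarrow> real \<Rightarrow> ennreal" and chi :: "(nat \<Rightarrow> real) \<Rightarrow> real"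
    and \<alpha> w lam :: real and f :: "(nat \<Rightarrow> real) \<Rightarrow> real"
  assumes "\<forall>j<n. orlicz (\<Phi> j)"
    and "sampling_kernel n chi \<alpha>"
    and "moment n chi 0 < \<infinity>"
    and "w > 0"
    and "f \<in> orlicz_space n \<Phi>"
    and "lam > 0"
  shows "modular n \<Phi> (\<lambda>x. lam * kant n chi w f x)
         \<le> ennreal ((LINT u|lebn n. \<bar>chi u\<bar>) / (enn2real (moment n chi 0)) ^ n)
           * modular n \<Phi> (\<lambda>x. lam * (enn2real (moment n chi 0)) ^ n * f x)"
proof -
  note phis = assms(1) and mom = assms(3) and w = assms(4) and lam = assms(6)
  have int: "integrable (lebn n) chi" and part: "\<forall>u\<in>Rn n. ((\<lambda>k. chi (vsub n u k)) has_sum 1) (Zn n)"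
    using assms(2) by (auto simp: sampling_kernel_def)
  have fm: "f \<in> borel_measurable (lebn n)" using assms(5) by (simp add: orlicz_space_def)
  define M where "M = (enn2real (moment n chi 0)) ^ n"
  have m1: "1 \<le> enn2real (moment n chi 0)" by (rule moment_ge1[OF mom part])
  have Mpos: "M > 0" unfolding M_def using m1 by simp
  interpret KS n chi w M
    using w Mpos borel_measurable_integrable[OF int] by unfold_locales
  define F where "F = (\<lambda>t. lam * M * f t)"
  have Fm: "F \<in> borel_measurable (lebn n)" unfolding F_def using fm by measurable
  have mass: "(\<integral>\<^sup>+t. Kk j x t \<partial>PM j) \<le> 1" if "j \<le> n" for j x
    using that
  proof (induction j arbitrary: x)
    case 0
    show ?case by (rule mass0) (use sum_le_M[OF mom part] in \<open>simp add: M_def\<close>)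
  next
    case (Suc j)
    then show ?case using mass_step[of j] by simp
  qed
  have base: "ennreal \<bar>lam * kant n chi w f x\<bar> \<le> (\<integral>\<^sup>+t. modG 0 \<Phi> F t * Kk 0 x t \<partial>PM 0)" for x
    unfolding F_def by (rule base0[OF lam fm])
  define u0 :: "nat \<Rightarrow> real" where "u0 = (\<lambda>_. undefined)"
  have "modular n \<Phi> (\<lambda>x. lam * kant n chi w f x) = modG n \<Phi> (\<lambda>x. lam * kant n chi w f x) u0"
    by (simp add: modular_def u0_def)
  also have "\<dots> \<le> (\<integral>\<^sup>+t. modG n \<Phi> F t * Kk n u0 t \<partial>PM n)"
    by (rule main_ind[OF phis Fm mass base]) auto
  also have "\<dots> = modG n \<Phi> F u0 * Kk n u0 u0"
    by (simp add: PiM_empty nn_integral_count_space_finite u0_def)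
  also have "Kk n u0 u0 = ennreal ((LINT u|lebn n. \<bar>chi u\<bar>) / M)"
    by (simp add: Kk_def Lf_full[OF int])
  also have "modG n \<Phi> F u0 = modular n \<Phi> (\<lambda>x. lam * (enn2real (moment n chi 0)) ^ n * f x)"
    by (simp add: modular_def u0_def F_def M_def)
  finally show ?thesis by (simp add: M_def mult.commute)
qed

end
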